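(* Let $1<p\le n$. Let $\mathbf{X}$ be a deterministic $n\times p$ matrix with $\mathbf{X}^T\mathbf{X}=\mathbf{I}_p$, let $\boldsymbol\beta_0=(\beta_1,0,\dots,0)^T\in\mathbb{R}^p$ with $\beta_1\neq 0$, let $\sigma>0$, and let $\mathbf{y}=\mathbf{X}\boldsymbol\beta_0+\boldsymbol\varepsilon$ with $\varepsilon_1,\dots,\varepsilon_n$ i.i.d. $N(0,\sigma^2)$. Set $\mathbf z=\mathbf{X}^T\mathbf{y}$. For $\lambda\ge 0$ define $$L_p(\lambda)=\frac1n\Big(\beta_1-\operatorname{sgn}(z_1)(|z_1|-\lambda)_+\Big)^2+\frac1n\sum_{j=2}^p\big((|z_j|-\lambda)_+\big)^2,\qquad L_1(\lambda)=\frac1n\Big(\beta_1-\operatorname{sgn}(z_1)(|z_1|-\lambda)_+\Big)^2,$$ and $L_p(\lambda_p^* )=\min_{\lambda\ge0}L_p(\lambda)$, $L_1(\lambda_1^* )=\min_{\lambda\ge 0}L_1(\lambda)$. Then $$\mathbb E\left(\frac{L_p(\lambda_p^* )}{L_1(\lambda_1^* )}\right)=\infty.$$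
   Context: $(a)_+=\max(a,0)$; $\operatorname{sgn}$ is the sign function. The ratio is a nonnegative extended-real random variable with the convention $a/0=+\infty$ for $a>0$ (the value assigned to $0/0$ is any fixed number in $[0,\infty)$, e.g. $1$; it does not affect the conclusion). $L_p(\lambda)$ is the $L_2$ loss of the Lasso estimate $\hat\beta_{\lambda j}=\operatorname{sgn}(z_j)(|z_j|-\lambda)_+$ with all $p$ predictors and $L_1(\lambda)$ the loss using only the first (true) predictor. *)

theory Defs
  imports "HOL-Probability.Probability"
begin

definition pos_part :: "real \<Rightarrow> real" where
  "pos_part a = max a 0"

text \<open>Lasso (soft-thresholding) loss with all p predictors; z is indexed 0..p-1,
  index 0 being the true predictor.\<close>
definition loss_p :: "nat \<Rightarrow> nat \<Rightarrow> real \<Rightarrow> (nat \<Rightarrow> real) \<Rightarrow> real \<Rightarrow> real" where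
  "loss_p n p \<beta>1 z lam =
     (1 / real n) * (\<beta>1 - sgn (z 0) * pos_part (\<bar>z 0\<bar> - lam))\<^sup>2
   + (1 / real n) * (\<Sum>j\<in>{1..<p}. (pos_part (\<bar>z j\<bar> - lam))\<^sup>2)"

definition loss_1 :: "nat \<Rightarrow> real \<Rightarrow> (nat \<Rightarrow> real) \<Rightarrow> real \<Rightarrow> real" where
  "loss_1 n \<beta>1 z lam = (1 / real n) * (\<beta>1 - sgn (z 0) * pos_part (\<bar>z 0\<bar> - lam))\<^sup>2"

definition ext_ratio :: "real \<Rightarrow> real \<Rightarrow> ennreal" where
  "ext_ratio a b = (if b = 0 then (if a > 0 then \<infinity> else 1) else ennreal (a / b))"

end

theory Submission
  imports Defs
begin

lemma key_loss:
  fixes z :: "nat \<Rightarrow> real"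
  assumes b: "b \<noteq> 0" and n: "0 < n" and p: "1 < p"
    and s: "sgn (z 0) = sgn b" and a1: "\<bar>z 0\<bar> \<ge> \<bar>b\<bar>" and a2: "\<bar>z 1\<bar> \<ge> \<bar>z 0\<bar>"
  shows "ext_ratio (Inf (loss_p n p b z ` {0..})) (Inf (loss_1 n b z ` {0..})) = \<infinity>"
proof -
  have nn1: "\<And>l. 0 \<le> loss_1 n b z l" unfolding loss_1_def by simp
  have z0: "loss_1 n b z (\<bar>z 0\<bar> - \<bar>b\<bar>) = 0"
  proof -
    have "pos_part (\<bar>z 0\<bar> - (\<bar>z 0\<bar> - \<bar>b\<bar>)) = \<bar>b\<bar>" by (simp add: pos_part_def)
    moreover have "sgn b * \<bar>b\<bar> = b" by (simp add: sgn_mult_abs)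
    ultimately show ?thesis unfolding loss_1_def using s by simp
  qed
  have I1: "Inf (loss_1 n b z ` {0..}) = 0"
  proof (rule cInf_eq_minimum)
    show "0 \<in> loss_1 n b z ` {0..}" using z0 a1 by (metis atLeast_iff diff_ge_0_iff_ge image_eqI)
  qed (use nn1 in auto)
  define c where "c = b\<^sup>2 / (4 * real n)"
  have cpos: "c > 0" unfolding c_def using b n by simp
  have lb: "c \<le> loss_p n p b z l" if l: "l \<ge> 0" for l
  proof -
    have t1: "0 \<le> (1 / real n) * (b - sgn (z 0) * pos_part (\<bar>z 0\<bar> - l))\<^sup>2" by simp
    have "(pos_part (\<bar>z 1\<bar> - l))\<^sup>2 \<le> (\<Sum>j\<in>{1..<p}. (pos_part (\<bar>z j\<bar> - l))\<^sup>2)"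
      using p by (intro member_le_sum) auto
    then have t2: "(1 / real n) * (pos_part (\<bar>z 1\<bar> - l))\<^sup>2 \<le> (1 / real n) * (\<Sum>j\<in>{1..<p}. (pos_part (\<bar>z j\<bar> - l))\<^sup>2)"
      by (intro mult_left_mono) auto
    show ?thesis
    proof (cases "l \<le> \<bar>z 0\<bar> - \<bar>b\<bar> / 2")
      case True
      then have "pos_part (\<bar>z 1\<bar> - l) \<ge> \<bar>b\<bar>/2" using a2 by (simp add: pos_part_def)
      then have "(pos_part (\<bar>z 1\<bar> - l))\<^sup>2 \<ge> (\<bar>b\<bar>/2)\<^sup>2"
        using b by (intro power_mono) auto
      then have "(1 / real n) * (pos_part (\<bar>z 1\<bar> - l))\<^sup>2 \<ge> (1/real n) * (\<bar>b\<bar>/2)\<^sup>2"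
        by (intro mult_left_mono) auto
      moreover have "(1/real n) * (\<bar>b\<bar>/2)\<^sup>2 = c" unfolding c_def by (simp add: power2_eq_square)
      ultimately show ?thesis using t1 t2 unfolding loss_p_def by linarith
    next
      case False
      define t where "t = pos_part (\<bar>z 0\<bar> - l)"
      have t0: "0 \<le> t" "t \<le> \<bar>b\<bar>/2" 
      proof -
        have "\<bar>z 0\<bar> - l < \<bar>b\<bar>/2" using False by linarith
        moreover have "0 \<le> \<bar>b\<bar>/2" by simp
        ultimately have "max (\<bar>z 0\<bar> - l) 0 \<le> \<bar>b\<bar>/2" by (intro max.boundedI) auto
        then show "t \<le> \<bar>b\<bar>/2" unfolding t_def pos_part_def .
        show "0 \<le> t" unfolding t_def pos_part_def by simp
      qed
      have e: "b - sgn (z 0) * t = sgn b * (\<bar>b\<bar> - t)"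
        using s by (simp add: right_diff_distrib sgn_mult_abs)
      have "(b - sgn (z 0) * t)\<^sup>2 = (\<bar>b\<bar> - t)\<^sup>2"
        unfolding e using b by (simp add: power_mult_distrib sgn_if)
      also have "(\<bar>b\<bar> - t)\<^sup>2 \<ge> (\<bar>b\<bar>/2)\<^sup>2"
        using t0 by (intro power_mono) auto
      finally have "(b - sgn (z 0) * t)\<^sup>2 \<ge> (\<bar>b\<bar>/2)\<^sup>2" .
      then have "(1/real n) * (b - sgn (z 0) * t)\<^sup>2 \<ge> (1/real n) * (\<bar>b\<bar>/2)\<^sup>2"
        by (intro mult_left_mono) auto
      moreover have "(1/real n) * (\<bar>b\<bar>/2)\<^sup>2 = c" unfolding c_def by (simp add: power2_eq_square)
      moreover have "0 \<le> (1 / real n) * (\<Sum>j\<in>{1..<p}. (pos_part (\<bar>z j\<bar> - l))\<^sup>2)"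
        by (intro mult_nonneg_nonneg sum_nonneg) auto
      ultimately show ?thesis unfolding loss_p_def t_def by linarith
    qed
  qed
  have "c \<le> Inf (loss_p n p b z ` {0..})"
    by (rule cInf_greatest) (auto intro: lb)
  then have "Inf (loss_p n p b z ` {0..}) > 0" using cpos by linarith
  then show ?thesis using I1 unfolding ext_ratio_def by simp
qed


lemma pos_interval:
  assumes "\<sigma> > 0" "a < (b::real)"
  shows "emeasure (density lborel (normal_density 0 \<sigma>)) {a<..<b} \<noteq> 0"
proof
  assume h: "emeasure (density lborel (normal_density 0 \<sigma>)) {a<..<b} = 0"
  have "emeasure (density lborel (normal_density 0 \<sigma>)) {a<..<b} =
        (\<integral>\<^sup>+ x. ennreal (normal_density 0 \<sigma> x) * indicator {a<..<b} x \<partial>lborel)"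
    by (simp add: emeasure_density)
  with h have "(\<integral>\<^sup>+ x. ennreal (normal_density 0 \<sigma> x) * indicator {a<..<b} x \<partial>lborel) = 0"
    by simp
  then have "AE x in lborel. ennreal (normal_density 0 \<sigma> x) * indicator {a<..<b} x = 0"
    by (subst (asm) nn_integral_0_iff_AE) auto
  then have "AE x in lborel. x \<notin> {a<..<b}"
  proof eventually_elim
    fix x assume "ennreal (normal_density 0 \<sigma> x) * indicator {a<..<b} x = 0"
    moreover have "normal_density 0 \<sigma> x > 0" by (rule normal_density_pos[OF assms(1)])
    ultimately show "x \<notin> {a<..<b}" by (auto split: split_indicator)
  qed
  then have "emeasure lborel {a<..<b} = 0"
    by (subst (asm) AE_iff_measurable[where N="{a<..<b}"]) auto
  then show False using assms(2) by simp
qed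

theorem proposition2p5:
  fixes n p :: nat and X :: "nat \<Rightarrow> nat \<Rightarrow> real" and \<beta>1 \<sigma> :: real
  assumes "1 < p" and "p \<le> n"
    and "\<forall>j<p. \<forall>k<p. (\<Sum>i<n. X i j * X i k) = (if j = k then 1 else 0)"
    and "\<beta>1 \<noteq> 0" and "\<sigma> > 0"
  shows "(\<integral>\<^sup>+ \<epsilon>. ext_ratio
            (Inf ((loss_p n p \<beta>1
                    (\<lambda>j. \<Sum>i<n. X i j * ((\<Sum>k<p. X i k * (if k = 0 then \<beta>1 else 0)) + \<epsilon> i))) ` {0..}))
            (Inf ((loss_1 n \<beta>1
                    (\<lambda>j. \<Sum>i<n. X i j * ((\<Sum>k<p. X i k * (if k = 0 then \<beta>1 else 0)) + \<epsilon> i))) ` {0..}))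
          \<partial>(PiM {..<n} (\<lambda>i. density lborel (normal_density 0 \<sigma>)))) = \<infinity>"
proof -
  let ?N = "density lborel (normal_density 0 \<sigma>)"
  let ?M = "PiM {..<n} (\<lambda>i. ?N)"
  define z where "z \<epsilon> = (\<lambda>j. \<Sum>i<n. X i j * ((\<Sum>k<p. X i k * (if k = 0 then \<beta>1 else 0)) + \<epsilon> i))"
    for \<epsilon> :: "nat \<Rightarrow> real"
  have n0: "0 < n" using assms by auto
  have b0: "\<bar>\<beta>1\<bar> > 0" using assms by simp
  define c where "c = 3 * \<bar>\<beta>1\<bar>"
  define e where "e i = \<beta>1 * X i 0 + c * X i 1" for i
  define S where "S = (\<Sum>i<n. \<bar>X i 0\<bar> + \<bar>X i 1\<bar>)"
  have S0: "S \<ge> 0" unfolding S_def by (intro sum_nonneg) auto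
  define \<delta> where "\<delta> = \<bar>\<beta>1\<bar> / (4 * (S + 1))"
  have d0: "\<delta> > 0" unfolding \<delta>_def using S0 b0 by simp
  have dS: "\<delta> * S < \<bar>\<beta>1\<bar> / 4"
  proof -
    have "\<delta> * S = \<bar>\<beta>1\<bar> / 4 * (S / (S + 1))" unfolding \<delta>_def by (simp add: field_simps)
    also have "\<dots> < \<bar>\<beta>1\<bar> / 4 * 1" using S0 b0 by (intro mult_strict_left_mono) auto
    finally show ?thesis by simp
  qed
  define B where "B = PiE {..<n} (\<lambda>i. {e i - \<delta> <..< e i + \<delta>})"
  have inner: "(\<Sum>k<p. X i k * (if k = 0 then \<beta>1 else 0)) = X i 0 * \<beta>1" for i
  proof -
    have "(\<Sum>k<p. X i k * (if k = 0 then \<beta>1 else 0)) = (\<Sum>k<p. if k = 0 then X i 0 * \<beta>1 else 0)"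
      by (rule sum.cong) auto
    also have "\<dots> = X i 0 * \<beta>1" using assms(1) by (simp add: sum.delta)
    finally show ?thesis .
  qed
  have G: "\<And>j k. j < p \<Longrightarrow> k < p \<Longrightarrow> (\<Sum>i<n. X i j * X i k) = (if j = k then 1 else 0)"
    using assms(3) by blast
  have zform: "z \<epsilon> j = \<beta>1 * (\<Sum>i<n. X i j * X i 0) + (\<Sum>i<n. X i j * \<epsilon> i)" for \<epsilon> j
    unfolding z_def inner by (simp add: distrib_left sum.distrib sum_distrib_left mult_ac)
  have we: "(\<Sum>i<n. X i j * e i) = \<beta>1 * (\<Sum>i<n. X i j * X i 0) + c * (\<Sum>i<n. X i j * X i 1)" for j
    unfolding e_def by (simp add: distrib_left sum.distrib sum_distrib_left mult_ac)
  have dev: "\<bar>(\<Sum>i<n. X i j * \<epsilon> i) - (\<Sum>i<n. X i j * e i)\<bar> < \<bar>\<beta>1\<bar> / 4"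
    if eB: "\<epsilon> \<in> B" and j: "j = 0 \<or> j = 1" for \<epsilon> j
  proof -
    have "\<bar>(\<Sum>i<n. X i j * \<epsilon> i) - (\<Sum>i<n. X i j * e i)\<bar> = \<bar>\<Sum>i<n. X i j * (\<epsilon> i - e i)\<bar>"
      by (simp add: sum_subtractf right_diff_distrib)
    also have "\<dots> \<le> (\<Sum>i<n. \<bar>X i j * (\<epsilon> i - e i)\<bar>)" by (rule sum_abs)
    also have "\<dots> \<le> (\<Sum>i<n. \<delta> * (\<bar>X i 0\<bar> + \<bar>X i 1\<bar>))"
    proof (rule sum_mono)
      fix i assume i: "i \<in> {..<n}"
      then have "e i - \<delta> < \<epsilon> i \<and> \<epsilon> i < e i + \<delta>" using eB unfolding B_def by (auto simp: PiE_iff)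
      then have "\<bar>\<epsilon> i - e i\<bar> \<le> \<delta>" by (simp add: abs_le_iff)
      then have "\<bar>X i j\<bar> * \<bar>\<epsilon> i - e i\<bar> \<le> \<bar>X i j\<bar> * \<delta>" by (intro mult_left_mono) auto
      moreover have "\<bar>X i j\<bar> \<le> \<bar>X i 0\<bar> + \<bar>X i 1\<bar>" using j by auto
      ultimately show "\<bar>X i j * (\<epsilon> i - e i)\<bar> \<le> \<delta> * (\<bar>X i 0\<bar> + \<bar>X i 1\<bar>)"
        using d0 by (simp add: abs_mult) (metis mult.commute mult_right_mono order_trans less_imp_le)
    qed
    also have "\<dots> = \<delta> * S" unfolding S_def by (simp add: sum_distrib_left)
    finally show ?thesis using dS by linarith
  qed
  have G00: "(\<Sum>i<n. X i 0 * X i 0) = 1" and G01: "(\<Sum>i<n. X i 0 * X i 1) = 0"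
    and G10: "(\<Sum>i<n. X i 1 * X i 0) = 0" and G11: "(\<Sum>i<n. X i 1 * X i 1) = 1"
    using G[of 0 0] G[of 0 1] G[of 1 0] G[of 1 1] assms(1) by auto
  have ptw: "ext_ratio (Inf (loss_p n p \<beta>1 (z \<epsilon>) ` {0..})) (Inf (loss_1 n \<beta>1 (z \<epsilon>) ` {0..})) = \<infinity>"
    if eB: "\<epsilon> \<in> B" for \<epsilon>
  proof -
    define r0 where "r0 = (\<Sum>i<n. X i 0 * \<epsilon> i) - (\<Sum>i<n. X i 0 * e i)"
    define r1 where "r1 = (\<Sum>i<n. X i 1 * \<epsilon> i) - (\<Sum>i<n. X i 1 * e i)"
    have r0: "\<bar>r0\<bar> < \<bar>\<beta>1\<bar> / 4" unfolding r0_def using dev[OF eB] by auto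
    have r1: "\<bar>r1\<bar> < \<bar>\<beta>1\<bar> / 4" unfolding r1_def using dev[OF eB] by auto
    have z0: "z \<epsilon> 0 = 2 * \<beta>1 + r0"
      unfolding r0_def zform we G00 G01 by simp
    have z1: "z \<epsilon> 1 = c + r1"
      unfolding r1_def zform we G10 G11 by simp
    show ?thesis
    proof (rule key_loss)
      have "(sgn (z \<epsilon> 0) = sgn \<beta>1 \<and> \<bar>z \<epsilon> 0\<bar> \<ge> \<bar>\<beta>1\<bar>) \<and> \<bar>z \<epsilon> 1\<bar> \<ge> \<bar>z \<epsilon> 0\<bar>"
      proof (cases "\<beta>1 > 0")
        case True
        then have ab: "\<bar>\<beta>1\<bar> = \<beta>1" by simp
        have "- (\<beta>1/4) < r0" "r0 < \<beta>1/4" "- (\<beta>1/4) < r1" "r1 < \<beta>1/4"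
          using r0 r1 unfolding ab abs_less_iff by auto
        then have p0: "z \<epsilon> 0 > 0" and p1: "z \<epsilon> 1 > 0" and q: "z \<epsilon> 0 \<ge> \<beta>1" "z \<epsilon> 1 \<ge> z \<epsilon> 0"
          unfolding z0 z1 c_def ab using True by linarith+
        show ?thesis using p0 p1 q True ab by simp
      next
        case False
        then have neg: "\<beta>1 < 0" using assms(4) by linarith
        then have ab: "\<bar>\<beta>1\<bar> = - \<beta>1" by simp
        have "\<beta>1/4 < r0" "r0 < - \<beta>1/4" "\<beta>1/4 < r1" "r1 < - \<beta>1/4"
          using r0 r1 unfolding ab abs_less_iff by auto
        then have p0: "z \<epsilon> 0 < 0" and p1: "z \<epsilon> 1 > 0" and q: "- z \<epsilon> 0 \<ge> - \<beta>1" "z \<epsilon> 1 \<ge> - z \<epsilon> 0"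
          unfolding z0 z1 c_def ab using neg by linarith+
        show ?thesis using p0 p1 q neg ab by simp
      qed
      then show "sgn (z \<epsilon> 0) = sgn \<beta>1" "\<bar>z \<epsilon> 0\<bar> \<ge> \<bar>\<beta>1\<bar>" "\<bar>z \<epsilon> 1\<bar> \<ge> \<bar>z \<epsilon> 0\<bar>"
        by blast+
    qed (use assms n0 in auto)
  qed
  interpret product_sigma_finite "\<lambda>i. ?N"
    unfolding product_sigma_finite_def
    using prob_space_imp_sigma_finite[OF prob_space_normal_density[OF assms(5)]] by simp
  have Bsets: "B \<in> sets ?M" unfolding B_def by (rule sets_PiM_I_finite) auto
  have "emeasure ?M B = (\<Prod>i<n. emeasure ?N {e i - \<delta> <..< e i + \<delta>})"
    unfolding B_def by (rule emeasure_PiM) auto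
  also have "\<dots> \<noteq> 0" using pos_interval[OF assms(5)] d0 by simp
  finally have Bpos: "emeasure ?M B \<noteq> 0" .
  have "(\<integral>\<^sup>+ \<epsilon>. \<infinity> * indicator B \<epsilon> \<partial>?M) \<le>
     (\<integral>\<^sup>+ \<epsilon>. ext_ratio (Inf (loss_p n p \<beta>1 (z \<epsilon>) ` {0..})) (Inf (loss_1 n \<beta>1 (z \<epsilon>) ` {0..})) \<partial>?M)"
    by (rule nn_integral_mono) (auto simp: ptw split: split_indicator)
  moreover have "(\<integral>\<^sup>+ \<epsilon>. \<infinity> * indicator B \<epsilon> \<partial>?M) = \<infinity>"
    using Bpos by (simp add: nn_integral_cmult_indicator[OF Bsets])
  ultimately show ?thesis unfolding z_def by (simp add: top_unique)
qed

end
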